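(* Let $r\ge 2$ and define $\phi_r:\mathbb{R}\times\mathbb{R}\to\mathbb{R}$ by $$\phi_r(a,b)=\frac{1}{r}\Big[a_+^r b_+^r+|a_-|^r+|b_-|^r\Big].$$ Then: 1) For any $r\ge 2$, $\phi_r$ is continuously differentiable on $\mathbb{R}\times\mathbb{R}$ with $$\nabla\phi_r(a,b)=\begin{bmatrix} a_+^{r-1}b_+^r-|a_-|^{r-1}\\ a_+^r b_+^{r-1}-|b_-|^{r-1}\end{bmatrix}.$$ Moreover, $\nabla\phi_r(a,b)=0$ if and only if $\phi_r(a,b)=0$. 2) For any $r>2$, $\phi_r$ is twice continuously differentiable on $\mathbb{R}\times\mathbb{R}$ with $$\nabla^2\phi_r(a,b)=\begin{bmatrix}(r-1)(a_+^{r-2}b_+^r+|a_-|^{r-2}) & r\,a_+^{r-1}b_+^{r-1}\\ r\,a_+^{r-1}b_+^{r-1} & (r-1)(a_+^r b_+^{r-2}+|b_-|^{r-2})\end{bmatrix}.$$ 3) For $r=2$, the generalized Hessian of $\phi_2$ at any $(a,b)\in\mathbb{R}\times\mathbb{R}$ satisfies $$\partial\nabla\phi_2(a,b)\subseteq\left\{\begin{bmatrix}u & 2a_+b_+\\ 2a_+b_+ & v\end{bmatrix}:\ u\in\Xi(a,b),\ v\in\Xi(b,a)\right\}.$$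
   Context: For $a\in\mathbb{R}$, $a_+:=\max\{a,0\}$ and $a_-:=\min\{a,0\}$; $a_+^r$ means $(a_+)^r$. The set $\Xi(a,b)\subseteq\mathbb{R}$ is defined by $\Xi(a,b)=\{b_+^2\}$ if $a>0$, $\Xi(a,b)=\mathrm{co}\{1,b_+^2\}$ (the closed interval between $1$ and $b_+^2$) if $a=0$, and $\Xi(a,b)=\{1\}$ if $a<0$. For a locally Lipschitz map $F:\mathbb{R}^n\to\mathbb{R}^m$, the (Clarke) generalized Jacobian is $\partial F(x)=\mathrm{co}\{\lim \nabla F(x^k): x^k\to x,\ x^k\in D_F\}$, where $D_F$ is the set of points where $F$ is differentiable; for a continuously differentiable function $\varphi$, its generalized Hessian is $\partial\nabla\varphi(x)$, the generalized Jacobian of $\nabla\varphi$. *)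

theory Defs
  imports "HOL-Analysis.Analysis"
begin

definition pospart :: "real \<Rightarrow> real" where "pospart a = max a 0"
definition negpart :: "real \<Rightarrow> real" where "negpart a = min a 0"

definition phi :: "real \<Rightarrow> real \<times> real \<Rightarrow> real" where
  "phi r = (\<lambda>(a,b). (1/r) * ((pospart a) powr r * (pospart b) powr r
                          + \<bar>negpart a\<bar> powr r + \<bar>negpart b\<bar> powr r))"

definition grad :: "(real \<times> real \<Rightarrow> real) \<Rightarrow> real \<times> real \<Rightarrow> real \<times> real" where
  "grad f x = (THE g. (f has_derivative (\<lambda>v. g \<bullet> v)) (at x))"

definition Xi :: "real \<Rightarrow> real \<Rightarrow> real set" where
  "Xi a b = (if a > 0 then {(pospart b)^2}
             else if a = 0 then closed_segment 1 ((pospart b)^2)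
             else {1})"

definition clarke_jacobian ::
  "('a::real_normed_vector \<Rightarrow> 'b::real_normed_vector) \<Rightarrow> 'a \<Rightarrow> ('a \<Rightarrow>\<^sub>L 'b) set" where
  "clarke_jacobian F x = convex hull
     {J. \<exists>X D. (\<forall>k. (F has_derivative blinfun_apply (D k)) (at (X k)))
              \<and> X \<longlonglongrightarrow> x \<and> D \<longlonglongrightarrow> J}"

end

theory Submission imports Defs begin

lemma pospart_nonneg[simp]: "pospart x \<ge> 0" by (simp add: pospart_def)
lemma abs_negpart: "\<bar>negpart x\<bar> = pospart (-x)" by (simp add: pospart_def negpart_def)

lemma cont_pospart_powr:
  assumes "q > 0" shows "isCont (\<lambda>x. pospart x powr q) x"
proof -
  have c: "isCont pospart x" unfolding pospart_def by (intro continuous_intros)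
  show ?thesis unfolding isCont_def
    apply (rule tendsto_powr')
    using c assms by (auto simp: isCont_def)
qed

lemma deriv_pospart_powr:
  assumes p: "p > 1"
  shows "((\<lambda>x. pospart x powr p) has_real_derivative (p * pospart x powr (p-1))) (at x)"
proof (cases "x > 0")
  case True
  show ?thesis
    apply (rule has_field_derivative_transform_within_open[where S="{0<..}" and f="\<lambda>x. x powr p"])
    using has_real_derivative_powr[OF True, of p] True by (auto simp: pospart_def)
next
  case False
  show ?thesis
  proof (cases "x < 0")
    case True
    show ?thesis
      apply (rule has_field_derivative_transform_within_open[where S="{..<0}" and f="\<lambda>x. 0"])
      using True by (auto simp: pospart_def)
  next
    case False2: False
    with False have x0: "x = 0" by simp
    have lim: "((\<lambda>y. pospart y powr (p-1)) \<longlongrightarrow> 0) (at 0)"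
      using cont_pospart_powr[of "p-1" 0] p by (auto simp: isCont_def pospart_def)
    have "((\<lambda>y. (pospart y powr p - pospart 0 powr p) / (y - 0)) \<longlongrightarrow> 0) (at 0)"
    proof (rule Lim_null_comparison[OF _ lim], rule always_eventually, rule allI)
      fix y :: real
      show "norm ((pospart y powr p - pospart 0 powr p) / (y - 0)) \<le> pospart y powr (p-1)"
      proof (cases "y > 0")
        case True
        then have "pospart y powr p = y * y powr (p-1)"
          by (simp add: pospart_def powr_mult_base)
        then show ?thesis using True by (simp add: pospart_def)
      next
        case False
        then show ?thesis by (simp add: pospart_def)
      qed
    qed
    then show ?thesis using x0 by (simp add: has_field_derivative_iff pospart_def)
  qed
qed


lemma deriv_negabs_powr:
  assumes p: "p > 1"
  shows "((\<lambda>x. \<bar>negpart x\<bar> powr p) has_real_derivative (- (p * \<bar>negpart x\<bar> powr (p-1)))) (at x)"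
proof -
  have "((\<lambda>x. pospart (-x) powr p) has_real_derivative (p * pospart (-x) powr (p-1)) * (-1)) (at x)"
    by (rule DERIV_chain2[OF deriv_pospart_powr[OF p]]) (auto intro: derivative_eq_intros)
  then show ?thesis by (simp add: abs_negpart)
qed

lemma hd_fst: "(f has_real_derivative D) (at (fst z)) \<Longrightarrow> ((\<lambda>z. f (fst z)) has_derivative (\<lambda>v. D * fst v)) (at z)"
proof -
  assume a: "(f has_real_derivative D) (at (fst z))"
  have "((f \<circ> fst) has_derivative ((*) D \<circ> fst)) (at z)"
    apply (rule diff_chain_at)
     apply (rule has_derivative_fst[OF has_derivative_ident])
    using a by (simp add: has_field_derivative_def)
  then show ?thesis by (simp add: o_def)
qed

lemma hd_snd: "(f has_real_derivative D) (at (snd z)) \<Longrightarrow> ((\<lambda>z. f (snd z)) has_derivative (\<lambda>v. D * snd v)) (at z)"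
proof -
  assume a: "(f has_real_derivative D) (at (snd z))"
  have "((f \<circ> snd) has_derivative ((*) D \<circ> snd)) (at z)"
    apply (rule diff_chain_at)
     apply (rule has_derivative_snd[OF has_derivative_ident])
    using a by (simp add: has_field_derivative_def)
  then show ?thesis by (simp add: o_def)
qed

lemma grad_eqI:
  assumes "(f has_derivative (\<lambda>v. g \<bullet> v)) (at x)"
  shows "grad f x = g"
  unfolding grad_def
proof (rule the_equality)
  show "(f has_derivative (\<lambda>v. g \<bullet> v)) (at x)" by (rule assms)
next
  fix g' assume "(f has_derivative (\<lambda>v. g' \<bullet> v)) (at x)"
  from has_derivative_unique[OF assms this] have e: "\<And>v. g \<bullet> v = g' \<bullet> v" by metis
  from e[of "(1,0)"] e[of "(0,1)"] show "g' = g"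
    by (cases g; cases g') (simp add: inner_Pair)
qed

lemma hpf: "r > 1 \<Longrightarrow> ((\<lambda>z. pospart (fst z) powr r) has_derivative (\<lambda>v. (r * pospart (fst z) powr (r-1)) * fst v)) (at z)"
  using hd_fst[OF deriv_pospart_powr] by blast
lemma hps: "r > 1 \<Longrightarrow> ((\<lambda>z. pospart (snd z) powr r) has_derivative (\<lambda>v. (r * pospart (snd z) powr (r-1)) * snd v)) (at z)"
  using hd_snd[OF deriv_pospart_powr] by blast
lemma hnf: "r > 1 \<Longrightarrow> ((\<lambda>z. \<bar>negpart (fst z)\<bar> powr r) has_derivative (\<lambda>v. (- (r * \<bar>negpart (fst z)\<bar> powr (r-1))) * fst v)) (at z)"
  using hd_fst[OF deriv_negabs_powr] by blast
lemma hns: "r > 1 \<Longrightarrow> ((\<lambda>z. \<bar>negpart (snd z)\<bar> powr r) has_derivative (\<lambda>v. (- (r * \<bar>negpart (snd z)\<bar> powr (r-1))) * snd v)) (at z)"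
  using hd_snd[OF deriv_negabs_powr] by blast

definition G :: "real \<Rightarrow> real \<times> real \<Rightarrow> real \<times> real" where
 "G r = (\<lambda>(a,b). ((pospart a) powr (r-1) * (pospart b) powr r - \<bar>negpart a\<bar> powr (r-1),
           (pospart a) powr r * (pospart b) powr (r-1) - \<bar>negpart b\<bar> powr (r-1)))"

lemma phi_alt: "phi r = (\<lambda>z. (1/r) * ((pospart (fst z)) powr r * (pospart (snd z)) powr r
                          + \<bar>negpart (fst z)\<bar> powr r + \<bar>negpart (snd z)\<bar> powr r))"
  by (auto simp: phi_def)

lemma phi_deriv:
  assumes r: "r > 1"
  shows "(phi r has_derivative (\<lambda>v. G r z \<bullet> v)) (at z)"
proof -
  obtain a b where z: "z = (a,b)" by fastforce
  show ?thesis unfolding phi_alt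
    apply (rule has_derivative_eq_rhs)
    apply (rule has_derivative_mult_right)
    apply (rule has_derivative_add)+
    apply (rule has_derivative_mult)
    apply (rule hpf[OF r]) apply (rule hps[OF r]) apply (rule hnf[OF r]) apply (rule hns[OF r])
    using r by (auto simp: z G_def inner_Pair algebra_simps fun_eq_iff)
qed


lemma G_alt: "G r = (\<lambda>z. ((pospart (fst z)) powr (r-1) * (pospart (snd z)) powr r - \<bar>negpart (fst z)\<bar> powr (r-1),
           (pospart (fst z)) powr r * (pospart (snd z)) powr (r-1) - \<bar>negpart (snd z)\<bar> powr (r-1)))"
  by (auto simp: G_def)

lemma grad_phi: "r > 1 \<Longrightarrow> grad (phi r) = G r"
  using grad_eqI[OF phi_deriv] by blast

lemma cpf: "q > 0 \<Longrightarrow> continuous (at z) (\<lambda>z. pospart (fst z) powr q)"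
  by (rule isCont_o2[OF _ cont_pospart_powr]) (auto intro: continuous_intros)
lemma cps: "q > 0 \<Longrightarrow> continuous (at z) (\<lambda>z. pospart (snd z) powr q)"
  by (rule isCont_o2[OF _ cont_pospart_powr]) (auto intro: continuous_intros)
lemma cnf: "q > 0 \<Longrightarrow> continuous (at z) (\<lambda>z. \<bar>negpart (fst z)\<bar> powr q)"
  unfolding abs_negpart by (rule isCont_o2[OF _ cont_pospart_powr]) (auto intro: continuous_intros)
lemma cns: "q > 0 \<Longrightarrow> continuous (at z) (\<lambda>z. \<bar>negpart (snd z)\<bar> powr q)"
  unfolding abs_negpart by (rule isCont_o2[OF _ cont_pospart_powr]) (auto intro: continuous_intros)

lemma G_cont: "r > 1 \<Longrightarrow> continuous_on UNIV (G r)"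
  unfolding G_alt continuous_on_eq_continuous_at[OF open_UNIV]
  by (auto intro!: continuous_intros cpf cps cnf cns)

lemma G_zero: assumes "r > 1" shows "G r (a,b) = 0 \<longleftrightarrow> phi r (a,b) = 0"
proof -
  have r0: "r > 0" "r - 1 > 0" using assms by auto
  consider "a < 0" | "b < 0" | "a \<ge> 0" "b \<ge> 0" by linarith
  then show ?thesis
  proof cases
    case 1
    have "\<bar>negpart a\<bar> powr r > 0" "\<bar>negpart a\<bar> powr (r-1) > 0" using 1 by (auto simp: negpart_def)
    moreover have "pospart a = 0" using 1 by (simp add: pospart_def)
    moreover have "\<bar>negpart b\<bar> powr r \<ge> 0" by simp
    ultimately have "(\<bar>negpart a\<bar> powr r + \<bar>negpart b\<bar> powr r) / r > 0" "fst (G r (a,b)) \<noteq> 0" using r0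
      by (auto simp: G_def intro!: divide_pos_pos add_pos_nonneg)
    moreover have "phi r (a,b) = (\<bar>negpart a\<bar> powr r + \<bar>negpart b\<bar> powr r) / r" using 1
      by (simp add: phi_def pospart_def)
    ultimately have "phi r (a,b) > 0" "fst (G r (a,b)) \<noteq> 0" by auto
    then show ?thesis by auto
  next
    case 2
    have "\<bar>negpart b\<bar> powr r > 0" "\<bar>negpart b\<bar> powr (r-1) > 0" using 2 by (auto simp: negpart_def)
    moreover have "pospart b = 0" using 2 by (simp add: pospart_def)
    moreover have "\<bar>negpart a\<bar> powr r \<ge> 0" by simp
    ultimately have "(\<bar>negpart b\<bar> powr r + \<bar>negpart a\<bar> powr r) / r > 0" "snd (G r (a,b)) \<noteq> 0" using r0
      by (auto simp: G_def intro!: divide_pos_pos add_pos_nonneg)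
    moreover have "phi r (a,b) = (\<bar>negpart b\<bar> powr r + \<bar>negpart a\<bar> powr r) / r" using 2
      by (simp add: phi_def pospart_def)
    ultimately have "phi r (a,b) > 0" "snd (G r (a,b)) \<noteq> 0" by auto
    then show ?thesis by auto
  next
    case 3
    then show ?thesis using r0 by (auto simp: G_def phi_def zero_prod_def pospart_def negpart_def)
  qed
qed

definition L1 :: "(real \<times> real) \<Rightarrow>\<^sub>L (real \<times> real)" where "L1 = Blinfun (\<lambda>v. (fst v, 0))"
definition L2 :: "(real \<times> real) \<Rightarrow>\<^sub>L (real \<times> real)" where "L2 = Blinfun (\<lambda>v. (snd v, fst v))"
definition L3 :: "(real \<times> real) \<Rightarrow>\<^sub>L (real \<times> real)" where "L3 = Blinfun (\<lambda>v. (0, snd v))"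

lemma L1_apply[simp]: "blinfun_apply L1 v = (fst v, 0)"
  unfolding L1_def by (subst bounded_linear_Blinfun_apply) (auto intro!: bounded_linear_intros)
lemma L2_apply[simp]: "blinfun_apply L2 v = (snd v, fst v)"
  unfolding L2_def by (subst bounded_linear_Blinfun_apply) (auto intro!: bounded_linear_intros)
lemma L3_apply[simp]: "blinfun_apply L3 v = (0, snd v)"
  unfolding L3_def by (subst bounded_linear_Blinfun_apply) (auto intro!: bounded_linear_intros)

definition HH :: "real \<Rightarrow> real \<times> real \<Rightarrow> (real \<times> real) \<Rightarrow>\<^sub>L (real \<times> real)" where
  "HH r z = ((r-1) * ((pospart (fst z)) powr (r-2) * (pospart (snd z)) powr r + \<bar>negpart (fst z)\<bar> powr (r-2))) *\<^sub>R L1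
    + (r * (pospart (fst z)) powr (r-1) * (pospart (snd z)) powr (r-1)) *\<^sub>R L2
    + ((r-1) * ((pospart (fst z)) powr r * (pospart (snd z)) powr (r-2) + \<bar>negpart (snd z)\<bar> powr (r-2))) *\<^sub>R L3"

lemma HH_cont: "r > 2 \<Longrightarrow> continuous_on UNIV (HH r)"
  unfolding HH_def continuous_on_eq_continuous_at[OF open_UNIV]
  by (auto intro!: continuous_intros cpf cps cnf cns)

lemma HH_apply: "blinfun_apply (HH r (a,b)) =
               (\<lambda>(h,k).
                 ((r-1) * ((pospart a) powr (r-2) * (pospart b) powr r + \<bar>negpart a\<bar> powr (r-2)) * h
                    + r * (pospart a) powr (r-1) * (pospart b) powr (r-1) * k,
                  r * (pospart a) powr (r-1) * (pospart b) powr (r-1) * h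
                    + (r-1) * ((pospart a) powr r * (pospart b) powr (r-2) + \<bar>negpart b\<bar> powr (r-2)) * k))"
  unfolding HH_def
  apply (auto simp: fun_eq_iff blinfun.add_left blinfun.scaleR_left)
  done

lemma G_deriv: assumes r: "r > 2" shows "(G r has_derivative blinfun_apply (HH r z)) (at z)"
proof -
  obtain a b where z: "z = (a,b)" by fastforce
  have r1: "r > 1" "r - 1 > 1" using r by auto
  have e: "r - 1 - 1 = r - 2" by simp
  show ?thesis unfolding G_alt
    apply (rule has_derivative_eq_rhs)
     apply (rule has_derivative_Pair)
      apply (rule has_derivative_diff)
       apply (rule has_derivative_mult)
        apply (rule hpf[OF r1(2)]) apply (rule hps[OF r1(1)]) apply (rule hnf[OF r1(2)])
      apply (rule has_derivative_diff)
       apply (rule has_derivative_mult)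
        apply (rule hpf[OF r1(1)]) apply (rule hps[OF r1(2)]) apply (rule hns[OF r1(2)])
    apply (simp only: z HH_apply e)
    apply (auto simp: fun_eq_iff algebra_simps)
    done
qed


lemma G2_eq: "G 2 = (\<lambda>z. (pospart (fst z) * (pospart (snd z))^2 + negpart (fst z),
                          (pospart (fst z))^2 * pospart (snd z) + negpart (snd z)))"
  by (auto simp: G_def fun_eq_iff pospart_def negpart_def)

lemma uniq_right:
  fixes \<phi> :: "real \<Rightarrow> real"
  assumes "(\<phi> has_real_derivative A) (at 0)" "(\<phi> has_real_derivative B) (at 0 within {0..1})"
  shows "A = B"
proof -
  have nb: "at (0::real) within {0..1} \<noteq> bot"
    by (simp add: at_within_Icc_at_right)
  have "(\<phi> has_real_derivative A) (at 0 within {0..1})"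
    using assms(1) by (rule has_field_derivative_at_within)
  then show ?thesis
    using vector_derivative_unique_within[OF nb] assms(2)
    by (simp add: has_real_derivative_iff_has_vector_derivative)
qed

lemma dir_deriv:
  assumes "(F has_derivative D) (at X)"
  shows "((\<lambda>t. F (X + t *\<^sub>R v)) has_derivative (\<lambda>t. t *\<^sub>R D v)) (at 0)"
proof -
  have l: "linear D" using assms has_derivative_linear by blast
  have i: "((\<lambda>t::real. X + t *\<^sub>R v) has_derivative (\<lambda>t. t *\<^sub>R v)) (at 0)"
    by (auto intro!: derivative_eq_intros)
  have "((F \<circ> (\<lambda>t::real. X + t *\<^sub>R v)) has_derivative (D \<circ> (\<lambda>t. t *\<^sub>R v))) (at 0)"
    by (rule diff_chain_at[OF i]) (simp add: assms)
  then show ?thesis using linear_scale[OF l] by (simp add: o_def)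
qed

lemma dir_comp:
  assumes "(F has_derivative D) (at X)"
  shows "((\<lambda>t. fst (F (X + t *\<^sub>R v))) has_real_derivative fst (D v)) (at 0)"
    "((\<lambda>t. snd (F (X + t *\<^sub>R v))) has_real_derivative snd (D v)) (at 0)"
proof -
  have "((\<lambda>t. fst (F (X + t *\<^sub>R v))) has_derivative (\<lambda>t. fst (t *\<^sub>R D v))) (at 0)"
    using has_derivative_fst[OF dir_deriv[OF assms]] .
  moreover have "(\<lambda>t. fst (t *\<^sub>R D v)) = (*) (fst (D v))" by (auto simp: fun_eq_iff)
  ultimately show "((\<lambda>t. fst (F (X + t *\<^sub>R v))) has_real_derivative fst (D v)) (at 0)"
    by (simp add: has_field_derivative_def)
  have "((\<lambda>t. snd (F (X + t *\<^sub>R v))) has_derivative (\<lambda>t. snd (t *\<^sub>R D v))) (at 0)"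
    using has_derivative_snd[OF dir_deriv[OF assms]] .
  moreover have "(\<lambda>t. snd (t *\<^sub>R D v)) = (*) (snd (D v))" by (auto simp: fun_eq_iff)
  ultimately show "((\<lambda>t. snd (F (X + t *\<^sub>R v))) has_real_derivative snd (D v)) (at 0)"
    by (simp add: has_field_derivative_def)
qed

lemma right_deriv:
  "((\<lambda>t. pospart (x+t) * c + negpart (x+t)) has_real_derivative (if x \<ge> 0 then c else 1)) (at 0 within {0..1})"
proof (cases "x \<ge> 0")
  case True
  have "((\<lambda>t. (x+t) * c) has_real_derivative c) (at 0 within {0..1})"
    by (auto intro!: derivative_eq_intros)
  then have "((\<lambda>t. pospart (x+t) * c + negpart (x+t)) has_real_derivative c) (at 0 within {0..1})"
    by (rule has_field_derivative_transform_within[where d=1]) (use True in \<open>auto simp: pospart_def negpart_def\<close>)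
  then show ?thesis using True by simp
next
  case False
  have "((\<lambda>t. x+t) has_real_derivative 1) (at 0)"
    by (auto intro!: derivative_eq_intros)
  then have "((\<lambda>t. pospart (x+t) * c + negpart (x+t)) has_real_derivative 1) (at 0)"
    by (rule has_field_derivative_transform_within_open[where S="{..<-x}"]) (use False in \<open>auto simp: pospart_def negpart_def\<close>)
  then show ?thesis using False by (simp add: has_field_derivative_at_within)
qed

lemma sq_deriv: "((\<lambda>t. (pospart (x+t))^2) has_real_derivative (2 * pospart x)) (at 0)"
proof -
  have "((\<lambda>t. pospart (x+t) powr 2) has_real_derivative (2 * pospart (x+0) powr (2-1)) * 1) (at 0)"
    by (rule DERIV_chain2[OF deriv_pospart_powr]) (auto intro!: derivative_eq_intros)
  then show ?thesis by simp
qed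

lemma pt:
  assumes d: "(G 2 has_derivative D) (at (a,b))"
  shows "fst (D (1,0)) = (if a \<ge> 0 then (pospart b)^2 else 1)"
        "snd (D (1,0)) = 2 * pospart a * pospart b"
        "fst (D (0,1)) = 2 * pospart a * pospart b"
        "snd (D (0,1)) = (if b \<ge> 0 then (pospart a)^2 else 1)"
proof -
  note c1 = dir_comp[OF d, of "(1,0)"] and c2 = dir_comp[OF d, of "(0,1)"]
  have e1: "(a,b) + t *\<^sub>R (1,0) = (a+t, b)" "(a,b) + t *\<^sub>R (0,1) = (a, b+t)" for t :: real by auto
  note c1' = c1[unfolded e1 G2_eq, simplified] and c2' = c2[unfolded e1 G2_eq, simplified]
  show "fst (D (1,0)) = (if a \<ge> 0 then (pospart b)^2 else 1)"
    by (rule uniq_right[OF c1'(1) right_deriv])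
  have "((\<lambda>t. (pospart (a+t))^2 * pospart b + negpart b) has_real_derivative (2 * pospart a) * pospart b + 0) (at 0)"
    by (intro DERIV_add DERIV_cmult_right sq_deriv DERIV_const)
  then show "snd (D (1,0)) = 2 * pospart a * pospart b"
    using DERIV_unique c1'(2) by fastforce
  have "((\<lambda>t. pospart a * (pospart (b+t))^2 + negpart a) has_real_derivative pospart a * (2 * pospart b) + 0) (at 0)"
    by (intro DERIV_add DERIV_cmult sq_deriv DERIV_const)
  then show "fst (D (0,1)) = 2 * pospart a * pospart b"
    using DERIV_unique c2'(1) by fastforce
  have "((\<lambda>t. pospart (b+t) * (pospart a)^2 + negpart (b+t)) has_real_derivative (if b \<ge> 0 then (pospart a)^2 else 1)) (at 0 within {0..1})"
    by (rule right_deriv)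
  then have "((\<lambda>t. (pospart a)^2 * pospart (b+t) + negpart (b+t)) has_real_derivative (if b \<ge> 0 then (pospart a)^2 else 1)) (at 0 within {0..1})"
    by (simp add: mult.commute)
  then show "snd (D (0,1)) = (if b \<ge> 0 then (pospart a)^2 else 1)"
    by (rule uniq_right[OF c2'(2)])
qed


lemma tendsto_pospart: "(f \<longlongrightarrow> x) F \<Longrightarrow> ((\<lambda>k. pospart (f k)) \<longlongrightarrow> pospart x) F"
  unfolding pospart_def by (intro tendsto_intros)

lemma lim_Xi:
  assumes xa: "xa \<longlonglongrightarrow> a" and xb: "xb \<longlonglongrightarrow> b"
    and u: "(\<lambda>k. if xa k \<ge> 0 then (pospart (xb k))^2 else 1) \<longlonglongrightarrow> u"
  shows "u \<in> Xi a b"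
proof -
  have pb: "(\<lambda>k. (pospart (xb k))^2) \<longlonglongrightarrow> (pospart b)^2"
    by (intro tendsto_intros tendsto_pospart xb)
  consider "a > 0" | "a < 0" | "a = 0" by linarith
  then show ?thesis
  proof cases
    case 1
    have ev: "eventually (\<lambda>k. 0 < xa k) sequentially" using order_tendstoD(1)[OF xa 1] .
    have "(\<lambda>k. if xa k \<ge> 0 then (pospart (xb k))^2 else 1) \<longlonglongrightarrow> (pospart b)^2"
      by (rule Lim_transform_eventually[OF pb]) (use ev in \<open>auto elim: eventually_mono\<close>)
    then have "u = (pospart b)^2" using u LIMSEQ_unique by blast
    then show ?thesis using 1 by (simp add: Xi_def)
  next
    case 2
    have ev: "eventually (\<lambda>k. xa k < 0) sequentially" using order_tendstoD(2)[OF xa 2] .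
    have "(\<lambda>k. if xa k \<ge> 0 then (pospart (xb k))^2 else 1) \<longlonglongrightarrow> 1"
      by (rule Lim_transform_eventually[OF tendsto_const]) (use ev in \<open>auto elim: eventually_mono\<close>)
    then have "u = 1" using u LIMSEQ_unique by blast
    then show ?thesis using 2 by (simp add: Xi_def)
  next
    case 3
    let ?s = "\<lambda>k. if xa k \<ge> 0 then (pospart (xb k))^2 else 1"
    have "(\<lambda>k. (?s k - 1) * (?s k - (pospart (xb k))^2)) \<longlonglongrightarrow> (u - 1) * (u - (pospart b)^2)"
      by (intro tendsto_intros u pb)
    moreover have "(\<lambda>k. (?s k - 1) * (?s k - (pospart (xb k))^2)) = (\<lambda>k. 0)"
      by auto
    ultimately have "(u - 1) * (u - (pospart b)^2) = 0"
      using LIMSEQ_unique tendsto_const by metis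
    then have "u = 1 \<or> u = (pospart b)^2" by auto
    then show ?thesis using 3 by (auto simp: Xi_def)
  qed
qed

lemma convex_Xi: "convex (Xi a b)"
  by (auto simp: Xi_def)

lemma convex_T: "convex {J :: (real \<times> real) \<Rightarrow>\<^sub>L (real \<times> real). \<exists>u \<in> Xi a b. \<exists>v \<in> Xi b a.
          blinfun_apply J = (\<lambda>(h,k). (u * h + 2 * pospart a * pospart b * k,
                                        2 * pospart a * pospart b * h + v * k))}"
  unfolding convex_def
proof (clarify)
  fix J1 J2 :: "(real \<times> real) \<Rightarrow>\<^sub>L (real \<times> real)" and s t :: real and u1 v1 u2 v2
  assume st: "0 \<le> s" "0 \<le> t" "s + t = 1" and u1: "u1 \<in> Xi a b" and v1: "v1 \<in> Xi b a"
    and J1: "blinfun_apply J1 = (\<lambda>(h,k). (u1 * h + 2 * pospart a * pospart b * k,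
                                        2 * pospart a * pospart b * h + v1 * k))"
    and u2: "u2 \<in> Xi a b" and v2: "v2 \<in> Xi b a"
    and J2: "blinfun_apply J2 = (\<lambda>(h,k). (u2 * h + 2 * pospart a * pospart b * k,
                                        2 * pospart a * pospart b * h + v2 * k))"
  have U: "s * u1 + t * u2 \<in> Xi a b" using convexD[OF convex_Xi u1 u2 st] by simp
  have V: "s * v1 + t * v2 \<in> Xi b a" using convexD[OF convex_Xi v1 v2 st] by simp
  have c: "s * c + t * c = c" for c :: real using st(3) by (metis distrib_right mult_1)
  have "blinfun_apply (s *\<^sub>R J1 + t *\<^sub>R J2) = (\<lambda>(h,k). ((s * u1 + t * u2) * h + 2 * pospart a * pospart b * k,
                                        2 * pospart a * pospart b * h + (s * v1 + t * v2) * k))"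
  proof -
    have "s * (2 * pospart a * pospart b * k) + t * (2 * pospart a * pospart b * k) = 2 * pospart a * pospart b * k" for k
      by (rule c)
    then show ?thesis
      by (auto simp: fun_eq_iff blinfun.add_left blinfun.scaleR_left J1 J2 algebra_simps)
  qed
  then show "\<exists>u\<in>Xi a b. \<exists>v\<in>Xi b a. blinfun_apply (s *\<^sub>R J1 + t *\<^sub>R J2) = (\<lambda>(h,k). (u * h + 2 * pospart a * pospart b * k,
                                        2 * pospart a * pospart b * h + v * k))"
    using U V by blast
qed


lemma part3: "clarke_jacobian (grad (phi 2)) (a,b) \<subseteq>
     {J. \<exists>u \<in> Xi a b. \<exists>v \<in> Xi b a.
          blinfun_apply J = (\<lambda>(h,k). (u * h + 2 * pospart a * pospart b * k,
                                        2 * pospart a * pospart b * h + v * k))}"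
  unfolding clarke_jacobian_def grad_phi[of 2, simplified]
proof (rule hull_minimal[where S=convex, OF _ convex_T[of a b]], clarify)
  fix J X and D :: "nat \<Rightarrow> (real \<times> real) \<Rightarrow>\<^sub>L (real \<times> real)"
  assume hD: "\<forall>k. (G 2 has_derivative blinfun_apply (D k)) (at (X k))"
    and X: "X \<longlonglongrightarrow> (a,b)" and DJ: "D \<longlonglongrightarrow> J"
  define xa where "xa = (\<lambda>k. fst (X k))"
  define xb where "xb = (\<lambda>k. snd (X k))"
  have xa: "xa \<longlonglongrightarrow> a" unfolding xa_def using tendsto_fst[OF X] by simp
  have xb: "xb \<longlonglongrightarrow> b" unfolding xb_def using tendsto_snd[OF X] by simp
  have hk: "(G 2 has_derivative blinfun_apply (D k)) (at (xa k, xb k))" for k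
    using hD unfolding xa_def xb_def by simp
  note P = pt[OF hk]
  have ap: "(\<lambda>k. blinfun_apply (D k) w) \<longlonglongrightarrow> blinfun_apply J w" for w
    by (intro tendsto_intros DJ)
  have c: "(\<lambda>k. 2 * pospart (xa k) * pospart (xb k)) \<longlonglongrightarrow> 2 * pospart a * pospart b"
    by (intro tendsto_intros tendsto_pospart xa xb)
  define u where "u = fst (blinfun_apply J (1,0))"
  define v where "v = snd (blinfun_apply J (0,1))"
  have "u \<in> Xi a b"
    apply (rule lim_Xi[OF xa xb])
    using tendsto_fst[OF ap[of "(1,0)"]] unfolding P u_def .
  moreover have "v \<in> Xi b a"
    apply (rule lim_Xi[OF xb xa])
    using tendsto_snd[OF ap[of "(0,1)"]] unfolding P v_def .
  moreover have o1: "snd (blinfun_apply J (1,0)) = 2 * pospart a * pospart b"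
    using tendsto_snd[OF ap[of "(1,0)"]] c unfolding P using LIMSEQ_unique by blast
  moreover have o2: "fst (blinfun_apply J (0,1)) = 2 * pospart a * pospart b"
    using tendsto_fst[OF ap[of "(0,1)"]] c unfolding P using LIMSEQ_unique by blast
  moreover have "blinfun_apply J = (\<lambda>(h,k). (u * h + 2 * pospart a * pospart b * k,
                                        2 * pospart a * pospart b * h + v * k))"
  proof (rule ext, clarify)
    fix h k :: real
    have "(h,k) = h *\<^sub>R (1,0) + k *\<^sub>R (0,1)" by simp
    then have "blinfun_apply J (h,k) = h *\<^sub>R blinfun_apply J (1,0) + k *\<^sub>R blinfun_apply J (0,1)"
      by (metis blinfun.add_right blinfun.scaleR_right)
    also have "\<dots> = (u * h + 2 * pospart a * pospart b * k, 2 * pospart a * pospart b * h + v * k)"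
      using o1 o2 unfolding u_def v_def
      by (cases "blinfun_apply J (1,0)"; cases "blinfun_apply J (0,1)") (auto simp: algebra_simps)
    finally show "blinfun_apply J (h,k) = (u * h + 2 * pospart a * pospart b * k, 2 * pospart a * pospart b * h + v * k)" .
  qed
  ultimately show "\<exists>u\<in>Xi a b. \<exists>v\<in>Xi b a. blinfun_apply J = (\<lambda>(h,k). (u * h + 2 * pospart a * pospart b * k,
                                        2 * pospart a * pospart b * h + v * k))"
    by blast
qed

theorem proposition2p2:
  shows
  "(\<forall>r::real. r \<ge> 2 \<longrightarrow>
      (\<forall>x. phi r differentiable (at x))
    \<and> continuous_on UNIV (grad (phi r))
    \<and> (\<forall>a b. grad (phi r) (a,b) =
          ((pospart a) powr (r-1) * (pospart b) powr r - \<bar>negpart a\<bar> powr (r-1),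
           (pospart a) powr r * (pospart b) powr (r-1) - \<bar>negpart b\<bar> powr (r-1)))
    \<and> (\<forall>a b. grad (phi r) (a,b) = 0 \<longleftrightarrow> phi r (a,b) = 0))
  \<and>
  (\<forall>r::real. r > 2 \<longrightarrow>
     (\<exists>H :: real \<times> real \<Rightarrow> (real \<times> real) \<Rightarrow>\<^sub>L (real \<times> real).
        continuous_on UNIV H
      \<and> (\<forall>a b. (grad (phi r) has_derivative blinfun_apply (H (a,b))) (at (a,b))
           \<and> blinfun_apply (H (a,b)) =
               (\<lambda>(h,k).
                 ((r-1) * ((pospart a) powr (r-2) * (pospart b) powr r + \<bar>negpart a\<bar> powr (r-2)) * h
                    + r * (pospart a) powr (r-1) * (pospart b) powr (r-1) * k,
                  r * (pospart a) powr (r-1) * (pospart b) powr (r-1) * h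
                    + (r-1) * ((pospart a) powr r * (pospart b) powr (r-2) + \<bar>negpart b\<bar> powr (r-2)) * k)))))
  \<and>
  (\<forall>a b. clarke_jacobian (grad (phi 2)) (a,b) \<subseteq>
     {J. \<exists>u \<in> Xi a b. \<exists>v \<in> Xi b a.
          blinfun_apply J = (\<lambda>(h,k). (u * h + 2 * pospart a * pospart b * k,
                                        2 * pospart a * pospart b * h + v * k))})"
proof (intro conjI allI impI)
  fix r :: real assume r: "r \<ge> 2"
  then have r1: "r > 1" by simp
  show "phi r differentiable (at x)" for x
    using phi_deriv[OF r1, of x] by (auto simp: differentiable_def)
  show "continuous_on UNIV (grad (phi r))"
    unfolding grad_phi[OF r1] by (rule G_cont[OF r1])
  show "grad (phi r) (a,b) =
          ((pospart a) powr (r-1) * (pospart b) powr r - \<bar>negpart a\<bar> powr (r-1),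
           (pospart a) powr r * (pospart b) powr (r-1) - \<bar>negpart b\<bar> powr (r-1))" for a b
    unfolding grad_phi[OF r1] by (simp add: G_def)
  show "grad (phi r) (a,b) = 0 \<longleftrightarrow> phi r (a,b) = 0" for a b
    unfolding grad_phi[OF r1] by (rule G_zero[OF r1])
next
  fix r :: real assume r: "r > 2"
  then have r1: "r > 1" by simp
  show "\<exists>H :: real \<times> real \<Rightarrow> (real \<times> real) \<Rightarrow>\<^sub>L (real \<times> real).
        continuous_on UNIV H
      \<and> (\<forall>a b. (grad (phi r) has_derivative blinfun_apply (H (a,b))) (at (a,b))
           \<and> blinfun_apply (H (a,b)) =
               (\<lambda>(h,k).
                 ((r-1) * ((pospart a) powr (r-2) * (pospart b) powr r + \<bar>negpart a\<bar> powr (r-2)) * h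
                    + r * (pospart a) powr (r-1) * (pospart b) powr (r-1) * k,
                  r * (pospart a) powr (r-1) * (pospart b) powr (r-1) * h
                    + (r-1) * ((pospart a) powr r * (pospart b) powr (r-2) + \<bar>negpart b\<bar> powr (r-2)) * k)))"
    apply (rule exI[of _ "HH r"])
    unfolding grad_phi[OF r1] using HH_cont[OF r] G_deriv[OF r] HH_apply by blast
next
  fix a b :: real
  show "clarke_jacobian (grad (phi 2)) (a,b) \<subseteq>
     {J. \<exists>u \<in> Xi a b. \<exists>v \<in> Xi b a.
          blinfun_apply J = (\<lambda>(h,k). (u * h + 2 * pospart a * pospart b * k,
                                        2 * pospart a * pospart b * h + v * k))}"
    by (rule part3)
qed

end
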